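(* Let $A,B\subset\mathbb R^n$ with $\dim_H(A\times B)<n$, let $M_2>M_1>0$, and let $f: B\times\mathbb R^n\to\mathbb R^n$ satisfy $\|f(x,t)-f(y,t)\|\le M_1\|x-y\|$ and $\|f(x,t)-f(x,t')\|\le M_1\|t-t'\|$ for all $x,y\in B$, $t,t'\in\mathbb R^n$. Then the set $\Delta=\{t\in\mathbb R^n:\ (M_2t+f(B,t))\cap A\ne\varnothing\}$ has Lebesgue measure zero in $\mathbb R^n$, where $M_2t+f(B,t)=\{M_2t+f(x,t): x\in B\}$.
   Context: $\dim_H$ denotes Hausdorff dimension. *)

theory Defs
  imports "HOL-Analysis.Analysis"
begin

definition hausdorff_pre :: "real \<Rightarrow> real \<Rightarrow> 'a::metric_space set \<Rightarrow> ennreal" where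
  "hausdorff_pre s \<delta> E =
     (INF U \<in> {U :: nat \<Rightarrow> 'a set. E \<subseteq> (\<Union>i. U i) \<and>
                  (\<forall>i. bounded (U i) \<and> diameter (U i) \<le> \<delta>)}.
        (\<Sum>i. ennreal (diameter (U i) powr s)))"

definition hausdorff_measure :: "real \<Rightarrow> 'a::metric_space set \<Rightarrow> ennreal" where
  "hausdorff_measure s E = (SUP \<delta> \<in> {0<..}. hausdorff_pre s \<delta> E)"

definition hausdorff_dim :: "'a::metric_space set \<Rightarrow> real" where
  "hausdorff_dim E = Inf {s. 0 \<le> s \<and> hausdorff_measure s E = 0}"

end

theory Submission
  imports Defs
begin


lemma hp_mono: "E \<subseteq> F \<Longrightarrow> hausdorff_pre s \<delta> E \<le> hausdorff_pre s \<delta> F"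
  unfolding hausdorff_pre_def by (rule INF_superset_mono) auto

lemma hp_union_zero:
  fixes E :: "nat \<Rightarrow> 'a::metric_space set"
  assumes z: "\<And>k. hausdorff_pre s \<delta> (E k) = 0"
  shows "hausdorff_pre s \<delta> (\<Union>k. E k) = 0"
proof -
  have "hausdorff_pre s \<delta> (\<Union>k. E k) \<le> 0 + ennreal e" if e: "e > 0" for e
  proof -
    have "\<exists>U. E k \<subseteq> (\<Union>i. U i) \<and> (\<forall>i. bounded (U i) \<and> diameter (U i) \<le> \<delta>) \<and>
          (\<Sum>i. ennreal (diameter (U i) powr s)) < ennreal (e * (1/2)^Suc k)" for k
    proof -
      have "hausdorff_pre s \<delta> (E k) < ennreal (e * (1/2)^Suc k)"
        using z e by simp
      then show ?thesis unfolding hausdorff_pre_def INF_less_iff by blast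
    qed
    then have "\<exists>UU. \<forall>k. E k \<subseteq> (\<Union>i. UU k i) \<and> (\<forall>i. bounded (UU k i) \<and> diameter (UU k i) \<le> \<delta>) \<and>
          (\<Sum>i. ennreal (diameter (UU k i) powr s)) < ennreal (e * (1/2)^Suc k)"
      by (intro choice allI) blast
    then obtain UU where UU0: "\<forall>k. E k \<subseteq> (\<Union>i. UU k i) \<and> (\<forall>i. bounded (UU k i) \<and> diameter (UU k i) \<le> \<delta>) \<and>
          (\<Sum>i. ennreal (diameter (UU k i) powr s)) < ennreal (e * (1/2)^Suc k)" by blast
    have UU: "\<And>k. E k \<subseteq> (\<Union>i. UU k i)" "\<And>k i. bounded (UU k i)"
      "\<And>k i. diameter (UU k i) \<le> \<delta>"
      "\<And>k. (\<Sum>i. ennreal (diameter (UU k i) powr s)) < ennreal (e * (1/2)^Suc k)"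
      using UU0 by blast+
    define V where "V i = case_prod UU (prod_decode i)" for i
    have cov: "(\<Union>k. E k) \<subseteq> (\<Union>i. V i)"
    proof
      fix y assume "y \<in> (\<Union>k. E k)"
      then obtain k j where "y \<in> UU k j" using UU(1) by blast
      then have "y \<in> V (prod_encode (k,j))" by (simp add: V_def)
      then show "y \<in> (\<Union>i. V i)" by blast
    qed
    have bd: "\<forall>i. bounded (V i) \<and> diameter (V i) \<le> \<delta>"
      using UU(2,3) by (simp add: V_def split: prod.split)
    have "hausdorff_pre s \<delta> (\<Union>k. E k) \<le> (\<Sum>i. ennreal (diameter (V i) powr s))"
      unfolding hausdorff_pre_def using cov bd by (intro INF_lower) auto
    also have "\<dots> = (\<Sum>k. \<Sum>j. ennreal (diameter (UU k j) powr s))"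
    proof -
      have "(\<Sum>i. (\<lambda>(k,j). ennreal (diameter (UU k j) powr s)) (prod_decode i)) =
            (\<Sum>k. \<Sum>j. ennreal (diameter (UU k j) powr s))"
        by (rule suminf_ennreal_2dimen) simp
      moreover have "(\<lambda>i. ennreal (diameter (V i) powr s)) = (\<lambda>i. (\<lambda>(k,j). ennreal (diameter (UU k j) powr s)) (prod_decode i))"
        by (simp add: V_def fun_eq_iff split: prod.split)
      ultimately show ?thesis by simp
    qed
    also have "\<dots> \<le> (\<Sum>k. ennreal (e * (1/2)^Suc k))"
      by (intro suminf_le less_imp_le UU(4) summableI)
    also have "\<dots> = ennreal e"
    proof -
      have "(\<lambda>k. (1/2::real)^Suc k) sums 1" using power_half_series .
      then have "(\<lambda>k. e * (1/2::real)^Suc k) sums (e * 1)" by (rule sums_mult)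
      then have "(\<Sum>k. e * (1/2::real)^Suc k) = e" "summable (\<lambda>k. e * (1/2::real)^Suc k)"
        by (simp_all add: sums_iff)
      moreover have "(\<Sum>k. ennreal (e * (1/2)^Suc k)) = ennreal (\<Sum>k. e * (1/2)^Suc k)"
        using e calculation(2) by (intro suminf_ennreal2) simp_all
      ultimately show ?thesis by simp
    qed
    finally show ?thesis by simp
  qed
  then have "hausdorff_pre s \<delta> (\<Union>k. E k) \<le> 0" by (rule ennreal_le_epsilon) auto
  then show ?thesis by simp
qed



lemma real_bound_aux:
  fixes k eps :: real and m N K :: nat
  assumes k: "k > 0" and eps: "eps > 0" and N1: "N \<ge> 1"
    and NC: "real N \<ge> ((2*k+3)^m * real m^(m+1)) / eps"
    and K: "real K \<le> k * N + 1"
  shows "real ((2*K+1)^m) * (real m / real N)^(m+1) \<le> eps"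
proof -
  define C where "C = (2*k+3)^m * real m^(m+1)"
  have Npos: "real N > 0" using N1 by simp
  have "real (2*K+1) \<le> (2*k+3) * real N" using K N1 k
    by (simp add: algebra_simps)
  then have "real ((2*K+1)^m) \<le> ((2*k+3) * real N)^m"
    by (simp only: of_nat_power) (rule power_mono, simp_all)
  then have "real ((2*K+1)^m) * (real m / real N)^(m+1) \<le> ((2*k+3) * real N)^m * (real m / real N)^(m+1)"
    by (rule mult_right_mono) simp
  also have "\<dots> = C / real N"
  proof -
    have "((2*k+3) * real N)^m * (real m / real N)^(m+1) = (2*k+3)^m * real m^(m+1) * (real N^m / (real N^m * real N))"
      by (simp only: power_mult_distrib power_divide power_Suc2 Suc_eq_plus1[symmetric]) (simp add: field_simps)
    also have "real N^m / (real N^m * real N) = 1 / real N" using Npos by simp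
    finally show ?thesis by (simp add: C_def)
  qed
  also have "\<dots> \<le> eps"
    using NC eps Npos unfolding C_def[symmetric] by (simp add: field_simps)
  finally show ?thesis .
qed

lemma inner_sum_Basis_coeff:
  fixes c :: "'b::euclidean_space \<Rightarrow> real"
  assumes "b \<in> Basis"
  shows "(\<Sum>b'\<in>Basis. c b' *\<^sub>R b') \<bullet> b = c b"
  using assms by (simp add: inner_sum_left inner_Basis if_distrib cong: if_cong)

lemma hp_box:
  fixes k \<delta> :: real
  assumes k: "k > 0" and d: "\<delta> > 0"
  shows "hausdorff_pre (real DIM('b) + 1) \<delta> {y::'b::euclidean_space. \<forall>b\<in>Basis. \<bar>y \<bullet> b\<bar> \<le> k} = 0"
proof -
  define m where "m = DIM('b)"
  define s where "s = real DIM('b) + 1"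
  define BX where "BX = {y::'b. \<forall>b\<in>Basis. \<bar>y \<bullet> b\<bar> \<le> k}"
  have "hausdorff_pre s \<delta> BX \<le> 0 + ennreal eps" if eps: "eps > 0" for eps
  proof -
    define C where "C = (2*k+3)^m * real m^(m+1)"
    obtain N :: nat where N: "real N \<ge> max 1 (max (C/eps) (real m/\<delta>))"
      using real_arch_simple by blast
    have N1: "N \<ge> 1" and NC: "real N \<ge> C/eps" and Nd: "real N \<ge> real m/\<delta>" using N by auto
    have Npos: "real N > 0" using N1 by simp
    define K where "K = nat \<lceil>k * N\<rceil>"
    have c0: "0 \<le> \<lceil>k * N\<rceil>" using k Npos by (simp add: less_le_trans[of "-1" 0])
    have rK: "real K = of_int \<lceil>k * N\<rceil>" using c0 by (simp add: K_def)
    have K: "real K \<le> k * N + 1" using rK ceiling_correct[of "k * N"] by linarith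
    have K2: "k * N \<le> real K" using rK ceiling_correct[of "k * N"] by linarith
    define G where "G = (\<Pi>\<^sub>E b\<in>(Basis::'b set). {-int K..int K})"
    define lo where "lo g = (\<Sum>b\<in>Basis. (of_int (g b) / N) *\<^sub>R b)" for g :: "'b \<Rightarrow> int"
    define hi where "hi g = (\<Sum>b\<in>Basis. ((of_int (g b) + 1) / N) *\<^sub>R b)" for g :: "'b \<Rightarrow> int"
    have lo_b: "lo g \<bullet> b = of_int (g b) / N" if "b \<in> Basis" for g b
      unfolding lo_def using that by (rule inner_sum_Basis_coeff)
    have hi_b: "hi g \<bullet> b = (of_int (g b) + 1) / N" if "b \<in> Basis" for g b
      unfolding hi_def using that by (rule inner_sum_Basis_coeff)
    define Q where "Q g = cbox (lo g) (hi g)" for g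
    have finG: "finite G" unfolding G_def by (intro finite_PiE) auto
    have nK: "nat (2 * int K + 1) = Suc (2 * K)" by (simp add: nat_add_distrib nat_mult_distrib)
    have cardG: "card G = (2*K+1)^m" unfolding G_def m_def
      by (simp add: card_PiE nK)
    have diamQ: "diameter (Q g) \<le> real m / N" "bounded (Q g)" for g
    proof -
      have le: "\<forall>b\<in>Basis. lo g \<bullet> b \<le> hi g \<bullet> b" using Npos by (simp add: lo_b hi_b divide_right_mono)
      have "diameter (Q g) = norm (lo g - hi g)" unfolding Q_def using le
        by (simp add: diameter_cbox dist_norm)
      also have "\<dots> \<le> (\<Sum>b\<in>Basis. \<bar>(lo g - hi g) \<bullet> b\<bar>)" by (rule norm_le_l1)
      also have "\<dots> = (\<Sum>b\<in>(Basis::'b set). 1 / N)"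
        by (intro sum.cong refl) (simp add: inner_diff_left lo_b hi_b diff_divide_distrib[symmetric])
      also have "\<dots> = real m / N" by (simp add: m_def)
      finally show "diameter (Q g) \<le> real m / N" .
      show "bounded (Q g)" unfolding Q_def by simp
    qed
    have cov: "BX \<subseteq> \<Union>(Q ` G)"
    proof
      fix y assume y: "y \<in> BX"
      define g where "g = restrict (\<lambda>b. \<lfloor>N * (y \<bullet> b)\<rfloor>) Basis"
      have "g \<in> G" unfolding G_def g_def
      proof (rule restrict_PiE_iff[THEN iffD2], intro ballI)
        fix b :: 'b assume b: "b \<in> Basis"
        have yb: "\<bar>y \<bullet> b\<bar> \<le> k" using y b unfolding BX_def by auto
        have a1: "\<bar>N * (y \<bullet> b)\<bar> = N * \<bar>y \<bullet> b\<bar>" by (simp add: abs_mult)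
        have a2: "N * \<bar>y \<bullet> b\<bar> \<le> N * k" using yb by (intro mult_left_mono) simp_all
        have "\<bar>N * (y \<bullet> b)\<bar> \<le> real K" using a1 a2 K2 by (simp add: mult.commute)
        then show "\<lfloor>N * (y \<bullet> b)\<rfloor> \<in> {- int K..int K}"
          by (auto simp: abs_le_iff) (linarith+)
      qed
      moreover have "y \<in> Q g" unfolding Q_def mem_box
      proof (intro ballI conjI)
        fix b :: 'b assume b: "b \<in> Basis"
        have "of_int \<lfloor>N * (y \<bullet> b)\<rfloor> \<le> N * (y \<bullet> b)" "N * (y \<bullet> b) \<le> of_int \<lfloor>N * (y \<bullet> b)\<rfloor> + 1"
          by linarith+
        then show "lo g \<bullet> b \<le> y \<bullet> b" "y \<bullet> b \<le> hi g \<bullet> b"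
          using b Npos by (simp_all add: lo_b hi_b g_def field_simps)
      qed
      ultimately show "y \<in> \<Union>(Q ` G)" by blast
    qed
    obtain xs where xs: "distinct xs" "set xs = Q ` G"
      using finite_distinct_list finite_imageI[OF finG] by metis
    define L where "L = length xs"
    have L: "L \<le> (2*K+1)^m" unfolding L_def
      using distinct_card[OF xs(1)] xs(2) card_image_le[OF finG, of Q] cardG by simp
    define U where "U i = (if i < L then xs ! i else {})" for i
    have Uin: "U i \<in> Q ` G" if iL: "i < L" for i
    proof -
      have "xs ! i \<in> set xs" using iL by (simp add: L_def)
      then show ?thesis using iL by (simp add: U_def xs(2))
    qed
    have Ud: "bounded (U i) \<and> diameter (U i) \<le> real m / N" for i
    proof (cases "i < L")
      case True then show ?thesis using Uin[OF True] diamQ by auto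
    next
      case False then show ?thesis by (simp add: U_def)
    qed
    have Ucov: "BX \<subseteq> (\<Union>i. U i)"
    proof -
      have "Q ` G \<subseteq> range U"
      proof
        fix X assume "X \<in> Q ` G"
        then obtain i where "i < L" "X = xs ! i" using xs(2) unfolding L_def by (metis in_set_conv_nth)
        then show "X \<in> range U" unfolding U_def by auto
      qed
      then have "\<Union>(Q ` G) \<subseteq> (\<Union>i. U i)" by (rule Sup_subset_mono)
      then show ?thesis using cov by (rule subset_trans[rotated])
    qed
    have md: "real m / N \<le> \<delta>" using Nd d Npos by (simp add: field_simps)
    have "hausdorff_pre s \<delta> BX \<le> (\<Sum>i. ennreal (diameter (U i) powr s))"
      unfolding hausdorff_pre_def
    proof (intro INF_lower CollectI conjI allI)
      fix i show "bounded (U i)" using Ud by blast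
      show "diameter (U i) \<le> \<delta>" using Ud[of i] md by linarith
    qed (rule Ucov)
    also have "\<dots> = (\<Sum>i<L. ennreal (diameter (U i) powr s))"
      by (rule suminf_finite) (auto simp: U_def)
    also have "\<dots> \<le> (\<Sum>i<L. ennreal ((real m / N) powr s))"
      using Ud by (intro sum_mono ennreal_leI powr_mono2) (auto simp: s_def intro: diameter_ge_0)
    also have "\<dots> = ennreal (real L * (real m / N) ^ (m+1))"
    proof -
      have "(real m / N) powr s = (real m / N) ^ (m+1)"
      proof (cases "m = 0")
        case True then show ?thesis by (simp add: m_def)
      next
        case False then show ?thesis using Npos
          by (subst powr_realpow[symmetric]) (auto simp: s_def m_def add.commute)
      qed
      moreover have X: "0 \<le> (real m / N) ^ (m+1)" by simp
      ultimately show ?thesis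
        by (simp only: sum_constant card_lessThan ennreal_of_nat_eq_real_of_nat ennreal_mult[symmetric] of_nat_0_le_iff)
    qed
    also have "\<dots> \<le> ennreal eps"
    proof (rule ennreal_leI)
      have "real L * (real m / N) ^ (m+1) \<le> real ((2*K+1)^m) * (real m / N) ^ (m+1)"
        using L by (intro mult_right_mono) (simp only: of_nat_le_iff, simp)
      also have "\<dots> \<le> eps" using real_bound_aux[OF k eps N1 _ K] NC by (simp add: C_def)
      finally show "real L * (real m / N) ^ (m+1) \<le> eps" .
    qed
    finally show ?thesis by simp
  qed
  then have "hausdorff_pre s \<delta> BX \<le> 0" by (rule ennreal_le_epsilon) auto
  then show ?thesis by (simp add: s_def BX_def)
qed



lemma lip_step:
  fixes f :: "'a::euclidean_space \<Rightarrow> 'a \<Rightarrow> 'a" and M1 M2 d :: real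
  assumes M: "0 < M1" "M1 < M2"
    and fx: "\<And>x y t. x \<in> B \<Longrightarrow> y \<in> B \<Longrightarrow> norm (f x t - f y t) \<le> M1 * norm (x - y)"
    and ft: "\<And>x t t'. x \<in> B \<Longrightarrow> norm (f x t - f x t') \<le> M1 * norm (t - t')"
    and x: "x \<in> B" and x': "x' \<in> B"
    and e: "M2 *\<^sub>R t + f x t = a" and e': "M2 *\<^sub>R t' + f x' t' = a'"
    and dd: "norm ((a, x) - (a', x')) \<le> d"
  shows "norm (t - t') \<le> ((1 + M1) / (M2 - M1)) * d"
proof -
  have na: "norm (a - a') \<le> d" using dd norm_fst_le[of "a - a'" "x - x'"] by simp
  have nx: "norm (x - x') \<le> d" using dd norm_snd_le[of "x - x'" "a - a'"] by simp
  have eq: "M2 *\<^sub>R (t - t') = (a - a') - (f x t - f x' t')"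
    using e e' by (simp add: scaleR_right_diff_distrib algebra_simps)
  have "M2 * norm (t - t') = norm (M2 *\<^sub>R (t - t'))" using M by simp
  also have "\<dots> \<le> norm (a - a') + norm (f x t - f x' t')"
    unfolding eq by (rule norm_triangle_ineq4)
  also have "norm (f x t - f x' t') \<le> norm (f x t - f x' t) + norm (f x' t - f x' t')"
    by (rule norm_diff_triangle_le[where y="f x' t"]) simp_all
  also have "\<dots> \<le> M1 * norm (x - x') + M1 * norm (t - t')"
    using fx[OF x x'] ft[OF x'] by (rule add_mono)
  finally have "M2 * norm (t - t') \<le> d + M1 * d + M1 * norm (t - t')"
    using na nx M mult_left_mono[OF nx, of M1] by linarith
  then have "(M2 - M1) * norm (t - t') \<le> (1 + M1) * d" by (simp add: algebra_simps)
  then show ?thesis using M by (simp add: field_simps)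
qed


lemma hm_zero_big:
  fixes E :: "'b::euclidean_space set"
  shows "hausdorff_measure (real DIM('b) + 1) E = 0"
proof -
  have "hausdorff_pre (real DIM('b)+1) \<delta> E = 0" if d: "\<delta> > 0" for \<delta>
  proof -
    define EE where "EE k = E \<inter> {y. \<forall>b\<in>Basis. \<bar>y \<bullet> b\<bar> \<le> real (Suc k)}" for k
    have "E \<subseteq> (\<Union>k. EE k)"
    proof
      fix y assume y: "y \<in> E"
      obtain k :: nat where k: "(\<Sum>b\<in>Basis. \<bar>y \<bullet> b\<bar>) \<le> real k" using real_arch_simple by blast
      have "\<bar>y \<bullet> b\<bar> \<le> real (Suc k)" if "b \<in> Basis" for b
      proof -
        have "\<bar>y \<bullet> b\<bar> \<le> (\<Sum>b\<in>Basis. \<bar>y \<bullet> b\<bar>)"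
          using that by (intro member_le_sum) auto
        then show ?thesis using k by simp
      qed
      then show "y \<in> (\<Union>k. EE k)" using y unfolding EE_def by blast
    qed
    moreover have "(\<Union>k. EE k) \<subseteq> E" unfolding EE_def by blast
    ultimately have E: "E = (\<Union>k. EE k)" by blast
    have "hausdorff_pre (real DIM('b)+1) \<delta> (EE k) = 0" for k
    proof -
      have "hausdorff_pre (real DIM('b)+1) \<delta> (EE k) \<le>
            hausdorff_pre (real DIM('b)+1) \<delta> {y::'b. \<forall>b\<in>Basis. \<bar>y \<bullet> b\<bar> \<le> real (Suc k)}"
        unfolding EE_def by (rule hp_mono) blast
      also have "\<dots> = 0" using d by (intro hp_box) auto
      finally show ?thesis by simp
    qed
    then show ?thesis using E hp_union_zero by metis
  qed
  then show ?thesis unfolding hausdorff_measure_def by simp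
qed

theorem mainTheorem4:
  fixes A B :: "'a::euclidean_space set"
    and f :: "'a \<Rightarrow> 'a \<Rightarrow> 'a"
    and M1 M2 :: real
  assumes "hausdorff_dim (A \<times> B) < real DIM('a)"
    and "0 < M1" and "M1 < M2"
    and "\<And>x y t. x \<in> B \<Longrightarrow> y \<in> B \<Longrightarrow> norm (f x t - f y t) \<le> M1 * norm (x - y)"
    and "\<And>x t t'. x \<in> B \<Longrightarrow> norm (f x t - f x t') \<le> M1 * norm (t - t')"
  shows "{t. \<exists>x\<in>B. M2 *\<^sub>R t + f x t \<in> A} \<in> null_sets lebesgue"
proof -
  note hdim = assms(1) and M = assms(2,3) and fx = assms(4) and ft = assms(5)
  define n where "n = DIM('a)"
  define S where "S = {s. 0 \<le> s \<and> hausdorff_measure s (A \<times> B) = 0}"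
  have "real DIM('a \<times> 'a) + 1 \<in> S" unfolding S_def using hm_zero_big[of "A \<times> B"] by simp
  then have "S \<noteq> {}" by blast
  then obtain s where sS: "s \<in> S" and sn: "s < real n"
    using cInf_lessD[of S "real n"] hdim unfolding hausdorff_dim_def S_def n_def by blast
  have s0: "0 \<le> s" using sS by (simp add: S_def)
  have "hausdorff_pre s 1 (A \<times> B) \<le> hausdorff_measure s (A \<times> B)"
    unfolding hausdorff_measure_def by (rule SUP_upper) simp
  then have hp0: "hausdorff_pre s 1 (A \<times> B) = 0" using sS by (simp add: S_def)
  define L where "L = (1 + M1) / (M2 - M1)"
  have L0: "L > 0" using M by (simp add: L_def)
  define c where "c = unit_ball_vol (real n)"
  have c0: "c \<ge> 0" unfolding c_def by simp
  define D where "D = {t. \<exists>x\<in>B. M2 *\<^sub>R t + f x t \<in> A}"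
  have "negligible D"
  proof (subst negligible_outer_le, intro allI impI)
    fix e :: real assume e: "e > 0"
    define eps where "eps = e / (c * L ^ n + 1)"
    have cL: "c * L ^ n \<ge> 0" using c0 L0 by simp
    have eps: "eps > 0" using e cL by (simp add: eps_def)
    have "hausdorff_pre s 1 (A \<times> B) < ennreal eps" using hp0 eps by simp
    then obtain U where U: "A \<times> B \<subseteq> (\<Union>i. U i)" "\<And>i. bounded (U i)" "\<And>i. diameter (U i) \<le> 1"
      and Usum: "(\<Sum>i. ennreal (diameter (U i) powr s)) < ennreal eps"
      unfolding hausdorff_pre_def INF_less_iff by blast
    define V where "V i = {t. \<exists>x\<in>B. \<exists>a\<in>A. (a, x) \<in> U i \<and> M2 *\<^sub>R t + f x t = a}" for i
    have Vlip: "norm (t - t') \<le> L * diameter (U i)" if tV: "t \<in> V i" "t' \<in> V i" for t t' i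
    proof -
      obtain x a where x: "x \<in> B" "a \<in> A" "(a, x) \<in> U i" "M2 *\<^sub>R t + f x t = a"
        using tV(1) unfolding V_def by blast
      obtain x' a' where x': "x' \<in> B" "a' \<in> A" "(a', x') \<in> U i" "M2 *\<^sub>R t' + f x' t' = a'"
        using tV(2) unfolding V_def by blast
      have "dist (a, x) (a', x') \<le> diameter (U i)"
        using U(2) x(3) x'(3) by (rule diameter_bounded_bound)
      then have "norm ((a, x) - (a', x')) \<le> diameter (U i)" by (simp add: dist_norm)
      from lip_step[OF M fx ft x(1) x'(1) x(4) x'(4) this] show ?thesis by (simp add: L_def)
    qed
    define T where "T i = (if V i = {} then {} else cball (SOME t. t \<in> V i) (L * diameter (U i)))" for i
    have VT: "V i \<subseteq> T i" for i
    proof (cases "V i = {}")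
      case False
      then have "(SOME t. t \<in> V i) \<in> V i" by (simp add: some_in_eq)
      then show ?thesis using False Vlip unfolding T_def by (auto simp: dist_norm norm_minus_commute)
    qed (simp add: T_def)
    have Tsets: "T i \<in> sets lebesgue" for i unfolding T_def by simp
    have dn: "diameter (U i) ^ n \<le> diameter (U i) powr s" for i
    proof -
      have d0: "0 \<le> diameter (U i)" using U(2) by (rule diameter_ge_0)
      show ?thesis
      proof (cases "diameter (U i) = 0")
        case True
        have "n \<noteq> 0" using DIM_positive[where 'a='a] unfolding n_def by linarith
        then show ?thesis using True by (simp add: power_0_left)
      next
        case False
        then have "diameter (U i) ^ n = diameter (U i) powr (real n)" using d0 by (simp add: powr_realpow)
        also have "\<dots> \<le> diameter (U i) powr s" using sn d0 U(3) by (intro powr_mono') auto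
        finally show ?thesis .
      qed
    qed
    have Tm: "emeasure lebesgue (T i) \<le> ennreal (c * L ^ n) * ennreal (diameter (U i) powr s)" for i
    proof (cases "V i = {}")
      case True then show ?thesis by (simp add: T_def)
    next
      case False
      have d0: "0 \<le> diameter (U i)" using U(2) by (rule diameter_ge_0)
      have "emeasure lebesgue (T i) = ennreal (c * (L * diameter (U i)) ^ n)"
        using False L0 d0 by (simp add: T_def emeasure_cball c_def n_def)
      also have "\<dots> \<le> ennreal (c * L ^ n * diameter (U i) powr s)"
        using mult_left_mono[OF dn[of i] cL] by (intro ennreal_leI) (simp add: power_mult_distrib mult.assoc)
      also have "\<dots> = ennreal (c * L ^ n) * ennreal (diameter (U i) powr s)"
        using cL by (simp add: ennreal_mult)
      finally show ?thesis .
    qed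
    have DT: "D \<subseteq> (\<Union>i. T i)"
    proof
      fix t assume "t \<in> D"
      then obtain x where x: "x \<in> B" "M2 *\<^sub>R t + f x t \<in> A" unfolding D_def by blast
      then obtain i where "(M2 *\<^sub>R t + f x t, x) \<in> U i" using U(1) by blast
      then have "t \<in> V i" using x unfolding V_def by blast
      then show "t \<in> (\<Union>i. T i)" using VT by blast
    qed
    have UT: "(\<Union>i. T i) \<in> sets lebesgue" using Tsets by blast
    have "emeasure lebesgue (\<Union>i. T i) \<le> (\<Sum>i. emeasure lebesgue (T i))"
      using Tsets by (intro emeasure_subadditive_countably) auto
    also have "\<dots> \<le> (\<Sum>i. ennreal (c * L ^ n) * ennreal (diameter (U i) powr s))"
      using Tm by (intro suminf_le summableI) 
    also have "\<dots> = ennreal (c * L ^ n) * (\<Sum>i. ennreal (diameter (U i) powr s))"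
      by (rule ennreal_suminf_cmult)
    also have "\<dots> \<le> ennreal (c * L ^ n) * ennreal eps"
      using Usum by (intro mult_left_mono) auto
    also have "\<dots> = ennreal (c * L ^ n * eps)" using cL eps by (simp add: ennreal_mult)
    also have "\<dots> \<le> ennreal e"
    proof (rule ennreal_leI)
      have "c * L ^ n * eps \<le> (c * L ^ n + 1) * eps" using eps by (simp add: algebra_simps)
      also have "\<dots> = e" using cL by (simp add: eps_def)
      finally show "c * L ^ n * eps \<le> e" .
    qed
    finally have em: "emeasure lebesgue (\<Union>i. T i) \<le> ennreal e" .
    then have fm: "(\<Union>i. T i) \<in> lmeasurable" using UT
      by (intro fmeasurableI) (auto simp: top_unique dest: order.strict_trans1[OF _ ennreal_less_top])
    have "measure lebesgue (\<Union>i. T i) \<le> e"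
      using em e by (simp add: measure_def enn2real_leI)
    then show "\<exists>T. D \<subseteq> T \<and> T \<in> lmeasurable \<and> measure lebesgue T \<le> e"
      using DT fm by blast
  qed
  then show ?thesis unfolding D_def negligible_iff_null_sets .
qed

end
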